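(* Let $A,B$ be $2n\times2n$ real symmetric positive definite matrices such that $AJB=BJA$ and $AB=BA$. Then $A^sJB^s=B^sJA^s$ for every $s\in\mathbb{R}$.
   Context: $J:=I_n\otimes\begin{pmatrix}0&1\\-1&0\end{pmatrix}$, where $I_n$ is the $n\times n$ identity matrix and $\otimes$ is the Kronecker product. For a real symmetric positive definite matrix $A$ and $s\in\mathbb{R}$, $A^s$ denotes the real symmetric positive definite matrix obtained by raising the eigenvalues of $A$ to the power $s$ in its spectral decomposition. *)

theory Defs
  imports "Jordan_Normal_Form.Matrix"
begin

definition sym_pos_def_mat :: "nat \<Rightarrow> real mat \<Rightarrow> bool" where
  "sym_pos_def_mat n A \<longleftrightarrow> A \<in> carrier_mat n n \<and> transpose_mat A = A \<and>
     (\<forall>x \<in> carrier_vec n. x \<noteq> 0\<^sub>v n \<longrightarrow> 0 < x \<bullet> (A *\<^sub>v x))"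

definition mat_rpow :: "real mat \<Rightarrow> real \<Rightarrow> real mat" where
  "mat_rpow A s = (SOME P. \<exists>U d. U \<in> carrier_mat (dim_row A) (dim_row A) \<and>
      transpose_mat U * U = 1\<^sub>m (dim_row A) \<and>
      (\<forall>i < dim_row A. 0 < d i) \<and>
      A = U * mat_diag (dim_row A) d * transpose_mat U \<and>
      P = U * mat_diag (dim_row A) (\<lambda>i. d i powr s) * transpose_mat U)"

text \<open>J = I_n (Kronecker) [[0,1],[-1,0]], a 2n x 2n matrix (0-based indices).\<close>
definition Jmat :: "nat \<Rightarrow> real mat" where
  "Jmat n = mat (2*n) (2*n) (\<lambda>(i,j).
      if i div 2 = j div 2 then
        (if even i \<and> odd j then 1 else if odd i \<and> even j then -1 else 0)
      else 0)"

end

theory Submission imports Defs "Jordan_Normal_Form.Char_Poly" begin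

lemma mult_NN[simp]: "A \<in> carrier_mat N N \<Longrightarrow> B \<in> carrier_mat N N \<Longrightarrow> A * B \<in> carrier_mat N N"
  by (rule mult_carrier_mat)
lemma transpose_NN[simp]: "A \<in> carrier_mat N N \<Longrightarrow> transpose_mat A \<in> carrier_mat N N"
  by simp
lemma smult_NN[simp]: "A \<in> carrier_mat N N \<Longrightarrow> c \<cdot>\<^sub>m A \<in> carrier_mat N N"
  by simp

lemma dim_mat_diag[simp]: "dim_row (mat_diag N f) = N" "dim_col (mat_diag N f) = N"
  unfolding mat_diag_def by auto
lemma left_one_NN[simp]: "(A::real mat) \<in> carrier_mat N M \<Longrightarrow> 1\<^sub>m N * A = A" by (rule left_mult_one_mat)
lemma right_one_NN[simp]: "(A::real mat) \<in> carrier_mat M N \<Longrightarrow> A * 1\<^sub>m N = A" by (rule right_mult_one_mat)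
lemma diag_assoc_NN[simp]: "X \<in> carrier_mat N N \<Longrightarrow>
   mat_diag N f * (mat_diag N g * X) = mat_diag N (\<lambda>i. f i * g i) * X"
  by (subst assoc_mult_mat[symmetric, of _ N N _ N _ N], auto)

definition fdiag :: "nat \<Rightarrow> real mat \<Rightarrow> (nat \<Rightarrow> real) \<Rightarrow> real mat" where
  "fdiag N U d = U * mat_diag N d * transpose_mat U"

definition orth :: "nat \<Rightarrow> real mat \<Rightarrow> bool" where
  "orth N U \<longleftrightarrow> U \<in> carrier_mat N N \<and> transpose_mat U * U = 1\<^sub>m N"

lemma orth_carrier[simp]: "orth N U \<Longrightarrow> U \<in> carrier_mat N N" unfolding orth_def by auto
lemma orth_TU: "orth N U \<Longrightarrow> transpose_mat U * U = 1\<^sub>m N" unfolding orth_def by auto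
lemma orth_UT: "orth N U \<Longrightarrow> U * transpose_mat U = 1\<^sub>m N"
  unfolding orth_def using mat_mult_left_right_inverse[of "transpose_mat U" N U] by auto

lemma fdiag_carrier[simp]: "orth N U \<Longrightarrow> fdiag N U d \<in> carrier_mat N N"
  unfolding fdiag_def by (metis mat_diag_dim mult_carrier_mat orth_carrier transpose_carrier_mat)

lemma fdiag_mult: assumes "orth N U"
  shows "fdiag N U f * fdiag N U g = fdiag N U (\<lambda>i. f i * g i)"
proof -
  have U: "U \<in> carrier_mat N N" using assms by simp
  have "fdiag N U f * fdiag N U g = U * mat_diag N f * (transpose_mat U * U) * mat_diag N g * transpose_mat U"
    unfolding fdiag_def using U
    by (simp add: assoc_mult_mat[of _ N N _ N _ N] orth_TU orth_UT)
  also have "\<dots> = fdiag N U (\<lambda>i. f i * g i)"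
    unfolding orth_TU[OF assms] fdiag_def using U
    by (simp add: assoc_mult_mat[of _ N N _ N _ N] orth_TU orth_UT)
  finally show ?thesis .
qed

lemma fdiag_smult: assumes "orth N U"
  shows "fdiag N U (\<lambda>i. c * f i) = c \<cdot>\<^sub>m fdiag N U f"
proof -
  have U: "U \<in> carrier_mat N N" using assms by simp
  have "mat_diag N (\<lambda>i. c * f i) = c \<cdot>\<^sub>m mat_diag N f"
    by (rule eq_matI, auto simp: mat_diag_def)
  thus ?thesis unfolding fdiag_def using U
    by (simp add: mult_smult_distrib[of _ N N _ N] mult_smult_assoc_mat[of _ N N _ N])
qed

lemma orth_cancel1[simp]: "orth N U \<Longrightarrow> Z \<in> carrier_mat N N \<Longrightarrow> transpose_mat U * (U * Z) = Z"
  by (subst assoc_mult_mat[symmetric, of _ N N _ N _ N], auto simp: orth_TU)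
lemma orth_cancel2[simp]: "orth N U \<Longrightarrow> Z \<in> carrier_mat N N \<Longrightarrow> U * (transpose_mat U * Z) = Z"
  by (subst assoc_mult_mat[symmetric, of _ N N _ N _ N], auto simp: orth_UT)

lemma diag_entries: assumes "Z \<in> carrier_mat N N" "i < N" "j < N"
  shows "(mat_diag N f * Z * mat_diag N g) $$ (i,j) = f i * Z $$ (i,j) * g j"
  using assms by (simp add: mat_diag_mult_left[of Z N N] mat_diag_mult_right[of _ N N])

lemma fdiag_proj: assumes "orth N U"
  shows "fdiag N U (\<lambda>k. if a k = a m then 1 else 0) * fdiag N U (\<lambda>k. g (a k))
     = g (a m) \<cdot>\<^sub>m fdiag N U (\<lambda>k. if a k = a m then 1 else 0)"
    and "fdiag N U (\<lambda>k. g (a k)) * fdiag N U (\<lambda>k. if a k = a m then 1 else 0)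
     = g (a m) \<cdot>\<^sub>m fdiag N U (\<lambda>k. if a k = a m then 1 else 0)"
proof -
  have e1: "(\<lambda>k. (if a k = a m then 1 else 0) * g (a k)) = (\<lambda>k. g (a m) * (if a k = a m then 1 else 0))"
    by auto
  have e2: "(\<lambda>k. g (a k) * (if a k = a m then 1 else 0)) = (\<lambda>k. g (a m) * (if a k = a m then 1 else 0))"
    by auto
  show "fdiag N U (\<lambda>k. if a k = a m then 1 else 0) * fdiag N U (\<lambda>k. g (a k))
     = g (a m) \<cdot>\<^sub>m fdiag N U (\<lambda>k. if a k = a m then 1 else 0)"
    unfolding fdiag_mult[OF assms] e1 fdiag_smult[OF assms] ..
  show "fdiag N U (\<lambda>k. g (a k)) * fdiag N U (\<lambda>k. if a k = a m then 1 else 0)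
     = g (a m) \<cdot>\<^sub>m fdiag N U (\<lambda>k. if a k = a m then 1 else 0)"
    unfolding fdiag_mult[OF assms] e2 fdiag_smult[OF assms] ..
qed

lemma fdiag_commute: assumes U: "orth N U" and X: "X \<in> carrier_mat N N"
  and c: "X * fdiag N U a = fdiag N U a * X"
  shows "X * fdiag N U (\<lambda>k. f (a k)) = fdiag N U (\<lambda>k. f (a k)) * X"
proof -
  have UN: "U \<in> carrier_mat N N" using U by simp
  define Y where "Y = transpose_mat U * (X * U)"
  have Y: "Y \<in> carrier_mat N N" unfolding Y_def using UN X by simp
  have XY: "X = U * (Y * transpose_mat U)" unfolding Y_def using UN X U
    by (simp add: assoc_mult_mat[of _ N N _ N _ N] orth_UT)
  have "transpose_mat U * (X * fdiag N U a) * U = transpose_mat U * (fdiag N U a * X) * U"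
    using c by simp
  hence YD: "Y * mat_diag N a = mat_diag N a * Y"
    unfolding Y_def fdiag_def using UN X U
    by (simp add: assoc_mult_mat[of _ N N _ N _ N] orth_TU orth_UT)
  have ent: "Y $$ (i,j) * a j = a i * Y $$ (i,j)" if "i < N" "j < N" for i j
  proof -
    have "(Y * mat_diag N a) $$ (i,j) = (mat_diag N a * Y) $$ (i,j)" using YD by simp
    thus ?thesis using that Y by (simp add: mat_diag_mult_left[of Y N N] mat_diag_mult_right[of Y N N])
  qed
  have YD2: "Y * mat_diag N (\<lambda>k. f (a k)) = mat_diag N (\<lambda>k. f (a k)) * Y"
  proof (rule eq_matI)
    fix i j assume ij: "i < dim_row (mat_diag N (\<lambda>k. f (a k)) * Y)" "j < dim_col (mat_diag N (\<lambda>k. f (a k)) * Y)"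
    hence i: "i < N" and j: "j < N" using Y by auto
    have "Y $$ (i,j) * f (a j) = f (a i) * Y $$ (i,j)"
    proof (cases "Y $$ (i,j) = 0")
      case False
      with ent[OF i j] have "a j = a i" by (metis mult.commute mult_left_cancel)
      thus ?thesis by simp
    qed simp
    thus "(Y * mat_diag N (\<lambda>k. f (a k))) $$ (i, j) = (mat_diag N (\<lambda>k. f (a k)) * Y) $$ (i, j)"
      using i j Y by (simp add: mat_diag_mult_left[of Y N N] mat_diag_mult_right[of Y N N])
  qed (insert Y, auto)
  have "X * fdiag N U (\<lambda>k. f (a k)) = U * ((Y * mat_diag N (\<lambda>k. f (a k))) * transpose_mat U)"
    unfolding XY fdiag_def using UN Y U by (simp add: assoc_mult_mat[of _ N N _ N _ N] orth_TU orth_UT)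
  also have "\<dots> = U * ((mat_diag N (\<lambda>k. f (a k)) * Y) * transpose_mat U)" unfolding YD2 ..
  also have "\<dots> = fdiag N U (\<lambda>k. f (a k)) * X"
    unfolding XY fdiag_def using UN Y U by (simp add: assoc_mult_mat[of _ N N _ N _ N] orth_TU orth_UT)
  finally show ?thesis .
qed

lemma fdiag_ext: assumes U: "orth N U" and X: "X \<in> carrier_mat N N" and Y: "Y \<in> carrier_mat N N"
  and h: "\<And>m n. m < N \<Longrightarrow> n < N \<Longrightarrow>
     fdiag N U (\<lambda>k. if a k = a m then 1 else 0) * X * fdiag N U (\<lambda>k. if a k = a n then 1 else 0)
   = fdiag N U (\<lambda>k. if a k = a m then 1 else 0) * Y * fdiag N U (\<lambda>k. if a k = a n then 1 else 0)"
  shows "X = Y"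
proof -
  have UN: "U \<in> carrier_mat N N" using U by simp
  have key: "transpose_mat U * (fdiag N U f * Z * fdiag N U g) * U = mat_diag N f * (transpose_mat U * Z * U) * mat_diag N g"
    if Z: "Z \<in> carrier_mat N N" for Z f g
    unfolding fdiag_def using UN Z U by (simp add: assoc_mult_mat[of _ N N _ N _ N] orth_TU orth_UT)
  have "transpose_mat U * X * U = transpose_mat U * Y * U"
  proof (rule eq_matI)
    fix m n assume "m < dim_row (transpose_mat U * Y * U)" "n < dim_col (transpose_mat U * Y * U)"
    hence m: "m < N" and n: "n < N" using UN by auto
    have "(mat_diag N (\<lambda>k. if a k = a m then 1 else 0) * (transpose_mat U * X * U) * mat_diag N (\<lambda>k. if a k = a n then 1 else 0)) $$ (m,n)
      = (mat_diag N (\<lambda>k. if a k = a m then 1 else 0) * (transpose_mat U * Y * U) * mat_diag N (\<lambda>k. if a k = a n then 1 else 0)) $$ (m,n)"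
      unfolding key[OF X, symmetric] key[OF Y, symmetric] h[OF m n] ..
    moreover have cX: "transpose_mat U * X * U \<in> carrier_mat N N" using UN X by simp
    moreover have cY: "transpose_mat U * Y * U \<in> carrier_mat N N" using UN Y by simp
    ultimately have "(if a m = a m then 1 else 0) * (transpose_mat U * X * U) $$ (m,n) * (if a n = a n then 1 else 0)
      = (if a m = a m then 1 else 0) * (transpose_mat U * Y * U) $$ (m,n) * (if a n = a n then 1 else 0)"
      by (simp only: diag_entries[OF cX m n] diag_entries[OF cY m n])
    thus "(transpose_mat U * X * U) $$ (m, n) = (transpose_mat U * Y * U) $$ (m, n)"
      by simp
  qed (insert UN, auto)
  hence "U * (transpose_mat U * X * U) * transpose_mat U = U * (transpose_mat U * Y * U) * transpose_mat U" by simp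
  thus ?thesis using UN X Y U by (simp add: assoc_mult_mat[of _ N N _ N _ N] orth_TU orth_UT)
qed

lemma scal_transfer: assumes W: "(W::real mat) \<in> carrier_mat N N" and e: "c \<cdot>\<^sub>m W = d \<cdot>\<^sub>m W"
  and imp: "c = d \<Longrightarrow> c' = d'"
  shows "c' \<cdot>\<^sub>m W = d' \<cdot>\<^sub>m W"
proof (rule eq_matI)
  fix i j assume ij: "i < dim_row (d' \<cdot>\<^sub>m W)" "j < dim_col (d' \<cdot>\<^sub>m W)"
  have "(c \<cdot>\<^sub>m W) $$ (i,j) = (d \<cdot>\<^sub>m W) $$ (i,j)" using e by simp
  hence "c * W $$ (i,j) = d * W $$ (i,j)" using ij by simp
  hence "c' * W $$ (i,j) = d' * W $$ (i,j)" using imp by (cases "c = d") auto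
  thus "(c' \<cdot>\<^sub>m W) $$ (i, j) = (d' \<cdot>\<^sub>m W) $$ (i, j)" using ij by simp
qed auto

lemma smult_smult_mat: "d \<cdot>\<^sub>m (c \<cdot>\<^sub>m (M::real mat)) = (c * d) \<cdot>\<^sub>m M"
  by (rule eq_matI, auto)

lemma sandwich: assumes "E \<in> carrier_mat N N" "E' \<in> carrier_mat N N" "(X::real mat) \<in> carrier_mat N N"
  "Y \<in> carrier_mat N N" "J \<in> carrier_mat N N"
  and "E * X = c \<cdot>\<^sub>m E" and "Y * E' = d \<cdot>\<^sub>m E'"
  shows "E * (X * J * Y) * E' = (c * d) \<cdot>\<^sub>m (E * J * E')"
proof -
  have "E * (X * J * Y) * E' = (E * X) * J * (Y * E')"
    using assms(1-5) by (simp add: assoc_mult_mat[of _ N N _ N _ N])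
  also have "\<dots> = (c \<cdot>\<^sub>m E) * J * (d \<cdot>\<^sub>m E')" using assms(6,7) by simp
  also have "\<dots> = (c * d) \<cdot>\<^sub>m (E * J * E')"
    using assms(1-5) by (simp add: mult_smult_distrib[of _ N N _ N] mult_smult_assoc_mat[of _ N N _ N] smult_smult_mat)
  finally show ?thesis .
qed

lemma core:
  assumes U: "orth N U" and V: "orth N V" and J: "J \<in> carrier_mat N N"
  and apos: "\<forall>i<N. 0 < a i" and bpos: "\<forall>i<N. 0 < b i"
  and AB: "fdiag N U a * fdiag N V b = fdiag N V b * fdiag N U a"
  and AJB: "fdiag N U a * J * fdiag N V b = fdiag N V b * J * fdiag N U a"
  shows "fdiag N U (\<lambda>k. a k powr s) * J * fdiag N V (\<lambda>k. b k powr s)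
       = fdiag N V (\<lambda>k. b k powr s) * J * fdiag N U (\<lambda>k. a k powr s)"
proof -
  define A where "A = fdiag N U a"
  define B where "B = fdiag N V b"
  define As where "As = fdiag N U (\<lambda>k. a k powr s)"
  define Bs where "Bs = fdiag N V (\<lambda>k. b k powr s)"
  define P where "P m = fdiag N U (\<lambda>k. if a k = a m then 1 else 0)" for m
  define Q where "Q m = fdiag N V (\<lambda>k. if b k = b m then 1 else 0)" for m
  have UN: "U \<in> carrier_mat N N" and VN: "V \<in> carrier_mat N N" using U V by auto
  have cA: "A \<in> carrier_mat N N" "B \<in> carrier_mat N N" "As \<in> carrier_mat N N" "Bs \<in> carrier_mat N N"
    "\<And>m. P m \<in> carrier_mat N N" "\<And>m. Q m \<in> carrier_mat N N"
    unfolding A_def B_def As_def Bs_def P_def Q_def using U V by auto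
  have A': "A = fdiag N U (\<lambda>k. (\<lambda>x. x) (a k))" unfolding A_def by simp
  have B': "B = fdiag N V (\<lambda>k. (\<lambda>x. x) (b k))" unfolding B_def by simp
  have PA: "P m * A = a m \<cdot>\<^sub>m P m" "A * P m = a m \<cdot>\<^sub>m P m" for m
    unfolding P_def A' using fdiag_proj[OF U, where a=a and m=m and g="\<lambda>x. x"] by auto
  have PAs: "P m * As = a m powr s \<cdot>\<^sub>m P m" "As * P m = a m powr s \<cdot>\<^sub>m P m" for m
    unfolding P_def As_def using fdiag_proj[OF U, where a=a and m=m and g="\<lambda>x. x powr s"] by auto
  have QB: "Q m * B = b m \<cdot>\<^sub>m Q m" "B * Q m = b m \<cdot>\<^sub>m Q m" for m
    unfolding Q_def B' using fdiag_proj[OF V, where a=b and m=m and g="\<lambda>x. x"] by auto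
  have QBs: "Q m * Bs = b m powr s \<cdot>\<^sub>m Q m" "Bs * Q m = b m powr s \<cdot>\<^sub>m Q m" for m
    unfolding Q_def Bs_def using fdiag_proj[OF V, where a=b and m=m and g="\<lambda>x. x powr s"] by auto
  have ABs: "A * Bs = Bs * A" unfolding Bs_def
    using fdiag_commute[OF V cA(1), of b "\<lambda>x. x powr s"] AB unfolding A_def by auto
  have BP: "B * P m = P m * B" for m unfolding P_def
    using fdiag_commute[OF U cA(2), of a "\<lambda>x. if x = a m then 1 else 0"] AB unfolding A_def B_def by auto
  have BsP: "Bs * P m = P m * Bs" for m unfolding P_def
    using fdiag_commute[OF U cA(4), of a "\<lambda>x. if x = a m then 1 else 0"] ABs unfolding A_def by auto
  have EL: "(Q p * P m) * X = c \<cdot>\<^sub>m (Q p * P m)" if "P m * X = c \<cdot>\<^sub>m P m" "X \<in> carrier_mat N N" for p m X c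
  proof -
    have "(Q p * P m) * X = Q p * (P m * X)" using cA that(2) by (simp add: assoc_mult_mat[of _ N N _ N _ N])
    also have "\<dots> = c \<cdot>\<^sub>m (Q p * P m)" unfolding that(1) using cA by (simp add: mult_smult_distrib[of _ N N _ N])
    finally show ?thesis .
  qed
  have EL2: "(Q p * P m) * X = c \<cdot>\<^sub>m (Q p * P m)" if "Q p * X = c \<cdot>\<^sub>m Q p" "X * P m = P m * X" "X \<in> carrier_mat N N" for p m X c
  proof -
    have "(Q p * P m) * X = Q p * (X * P m)" using cA that(3) unfolding that(2) by (simp add: assoc_mult_mat[of _ N N _ N _ N])
    also have "\<dots> = (Q p * X) * P m" using cA that(3) by (simp add: assoc_mult_mat[of _ N N _ N _ N])
    also have "\<dots> = c \<cdot>\<^sub>m (Q p * P m)" unfolding that(1) using cA by (simp add: mult_smult_assoc_mat[of _ N N _ N])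
    finally show ?thesis .
  qed
  have ER: "X * (P n * Q q) = c \<cdot>\<^sub>m (P n * Q q)" if "X * P n = c \<cdot>\<^sub>m P n" "X \<in> carrier_mat N N" for q n X c
  proof -
    have "X * (P n * Q q) = (X * P n) * Q q" using cA that(2) by (simp add: assoc_mult_mat[of _ N N _ N _ N])
    also have "\<dots> = c \<cdot>\<^sub>m (P n * Q q)" unfolding that(1) using cA by (simp add: mult_smult_assoc_mat[of _ N N _ N])
    finally show ?thesis .
  qed
  have ER2: "X * (P n * Q q) = c \<cdot>\<^sub>m (P n * Q q)" if "X * Q q = c \<cdot>\<^sub>m Q q" "X * P n = P n * X" "X \<in> carrier_mat N N" for q n X c
  proof -
    have "X * (P n * Q q) = (X * P n) * Q q" using cA that(3) by (simp add: assoc_mult_mat[of _ N N _ N _ N])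
    also have "\<dots> = P n * (X * Q q)" unfolding that(2) using cA that(3) by (simp add: assoc_mult_mat[of _ N N _ N _ N])
    also have "\<dots> = c \<cdot>\<^sub>m (P n * Q q)" unfolding that(1) using cA by (simp add: mult_smult_distrib[of _ N N _ N])
    finally show ?thesis .
  qed
  have reassoc: "Q p * (P m * (X * J * Y) * P n) * Q q = (Q p * P m) * (X * J * Y) * (P n * Q q)"
    if "X \<in> carrier_mat N N" "Y \<in> carrier_mat N N" for p m n q X Y
    using cA that J by (simp add: assoc_mult_mat[of _ N N _ N _ N])
  have cE: "Q p * P m \<in> carrier_mat N N" "P n * Q q \<in> carrier_mat N N" for p m n q using cA by auto
  show ?thesis unfolding As_def[symmetric] Bs_def[symmetric]
  proof (rule fdiag_ext[OF U, of _ _ a])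
    fix m n assume m: "m < N" and n: "n < N"
    show "fdiag N U (\<lambda>k. if a k = a m then 1 else 0) * (As * J * Bs) * fdiag N U (\<lambda>k. if a k = a n then 1 else 0) =
          fdiag N U (\<lambda>k. if a k = a m then 1 else 0) * (Bs * J * As) * fdiag N U (\<lambda>k. if a k = a n then 1 else 0)"
      unfolding P_def[symmetric]
    proof (rule fdiag_ext[OF V, of _ _ b])
      fix p q assume p: "p < N" and q: "q < N"
      show "fdiag N V (\<lambda>k. if b k = b p then 1 else 0) * (P m * (As * J * Bs) * P n) * fdiag N V (\<lambda>k. if b k = b q then 1 else 0) =
            fdiag N V (\<lambda>k. if b k = b p then 1 else 0) * (P m * (Bs * J * As) * P n) * fdiag N V (\<lambda>k. if b k = b q then 1 else 0)"
        unfolding Q_def[symmetric]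
      proof -
      let ?W = "(Q p * P m) * J * (P n * Q q)"
      have W: "?W \<in> carrier_mat N N" using cE J by auto
      have L: "Q p * (P m * (As * J * Bs) * P n) * Q q = (a m powr s * b q powr s) \<cdot>\<^sub>m ?W"
        unfolding reassoc[OF cA(3) cA(4)]
        by (rule sandwich[OF cE cA(3) cA(4) J EL[OF PAs(1) cA(3)] ER2[OF QBs(2) BsP cA(4)]])
      have R: "Q p * (P m * (Bs * J * As) * P n) * Q q = (b p powr s * a n powr s) \<cdot>\<^sub>m ?W"
        unfolding reassoc[OF cA(4) cA(3)]
        by (rule sandwich[OF cE cA(4) cA(3) J EL2[OF QBs(1) BsP cA(4)] ER[OF PAs(2) cA(3)]])
      have L1: "Q p * (P m * (A * J * B) * P n) * Q q = (a m * b q) \<cdot>\<^sub>m ?W"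
        unfolding reassoc[OF cA(1) cA(2)]
        by (rule sandwich[OF cE cA(1) cA(2) J EL[OF PA(1) cA(1)] ER2[OF QB(2) BP cA(2)]])
      have R1: "Q p * (P m * (B * J * A) * P n) * Q q = (b p * a n) \<cdot>\<^sub>m ?W"
        unfolding reassoc[OF cA(2) cA(1)]
        by (rule sandwich[OF cE cA(2) cA(1) J EL2[OF QB(1) BP cA(2)] ER[OF PA(2) cA(1)]])
      have AJB': "A * J * B = B * J * A" using AJB unfolding A_def B_def .
      have eq: "(a m * b q) \<cdot>\<^sub>m ?W = (b p * a n) \<cdot>\<^sub>m ?W"
        unfolding L1[symmetric] R1[symmetric] AJB' ..
      have "(a m powr s * b q powr s) \<cdot>\<^sub>m ?W = (b p powr s * a n powr s) \<cdot>\<^sub>m ?W"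
      proof (rule scal_transfer[OF W eq])
        assume "a m * b q = b p * a n"
        hence "(a m * b q) powr s = (b p * a n) powr s" by simp
        thus "a m powr s * b q powr s = b p powr s * a n powr s"
          using apos bpos m n p q by (simp add: powr_mult)
      qed
      thus "Q p * (P m * (As * J * Bs) * P n) * Q q = Q p * (P m * (Bs * J * As) * P n) * Q q"
        unfolding L R .
      qed
    qed (use cA J in \<open>simp_all\<close>)
  qed (use cA J in \<open>simp_all\<close>)
qed


lemma nonzero_vec_entry: assumes "v \<in> carrier_vec N" "v \<noteq> 0\<^sub>v N"
  shows "\<exists>k<N. v $ k \<noteq> 0"
proof (rule ccontr)
  assume "\<not> ?thesis"
  hence "v = 0\<^sub>v N" using assms(1) by (intro eq_vecI) auto
  thus False using assms(2) by contradiction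
qed

lemma real_eigen:
  fixes A :: "real mat"
  assumes A: "A \<in> carrier_mat N N" and At: "transpose_mat A = A" and N: "0 < N"
  shows "\<exists>r v. v \<in> carrier_vec N \<and> v \<noteq> 0\<^sub>v N \<and> A *\<^sub>v v = r \<cdot>\<^sub>v v"
proof -
  define Ac where "Ac = map_mat complex_of_real A"
  have Ac: "Ac \<in> carrier_mat N N" unfolding Ac_def using A by simp
  have cp: "char_poly Ac = map_poly of_real (char_poly A)"
    unfolding Ac_def using of_real_hom.char_poly_hom[OF A] by simp
  have "degree (char_poly Ac) = N" using degree_monic_char_poly[OF Ac] by simp
  hence "\<not> constant (poly (char_poly Ac))" using N by (simp add: constant_degree)
  then obtain z where z: "poly (char_poly Ac) z = 0" using fundamental_theorem_of_algebra by blast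
  hence "eigenvalue Ac z" using eigenvalue_root_char_poly[OF Ac] by simp
  then obtain v where ev: "eigenvector Ac v z" unfolding eigenvalue_def by blast
  hence v: "v \<in> carrier_vec N" "v \<noteq> 0\<^sub>v N" "Ac *\<^sub>v v = z \<cdot>\<^sub>v v"
    unfolding eigenvector_def using Ac by auto
  have Avi: "(\<Sum>j<N. of_real (A $$ (i,j)) * v $ j) = z * v $ i" if i: "i < N" for i
  proof -
    have "(Ac *\<^sub>v v) $ i = z * v $ i" using v(3) i v(1) by simp
    moreover have "(Ac *\<^sub>v v) $ i = (\<Sum>j<N. of_real (A $$ (i,j)) * v $ j)"
      using i v(1) A unfolding Ac_def by (auto simp: scalar_prod_def lessThan_atLeast0)
    ultimately show ?thesis by simp
  qed
  define s where "s = (\<Sum>i<N. \<Sum>j<N. of_real (A $$ (i,j)) * cnj (v $ i) * v $ j)"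
  define t where "t = (\<Sum>i<N. cnj (v $ i) * v $ i)"
  have st: "s = z * t"
  proof -
    have "s = (\<Sum>i<N. cnj (v $ i) * (\<Sum>j<N. of_real (A $$ (i,j)) * v $ j))"
      unfolding s_def by (simp add: sum_distrib_left algebra_simps)
    also have "\<dots> = (\<Sum>i<N. cnj (v $ i) * (z * v $ i))" using Avi by simp
    also have "\<dots> = z * t" unfolding t_def by (simp add: sum_distrib_left algebra_simps)
    finally show ?thesis .
  qed
  have Asym: "A $$ (i,j) = A $$ (j,i)" if "i < N" "j < N" for i j
  proof -
    have "A $$ (i,j) = transpose_mat A $$ (i,j)" using At by simp
    also have "\<dots> = A $$ (j,i)" using that A by simp
    finally show ?thesis .
  qed
  have cs: "cnj s = s"
  proof -
    have "cnj s = (\<Sum>i<N. \<Sum>j<N. of_real (A $$ (i,j)) * v $ i * cnj (v $ j))"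
      unfolding s_def by (simp add: cnj_sum)
    also have "\<dots> = (\<Sum>j<N. \<Sum>i<N. of_real (A $$ (i,j)) * v $ i * cnj (v $ j))"
      by (rule sum.swap)
    also have "\<dots> = s" unfolding s_def
      by (intro sum.cong refl, simp add: Asym mult.commute mult.left_commute)
    finally show ?thesis .
  qed
  have tr: "t = of_real (\<Sum>i<N. (Re (v $ i))\<^sup>2 + (Im (v $ i))\<^sup>2)"
    unfolding t_def by (simp add: mult.commute complex_mult_cnj)
  obtain k where k: "k < N" "v $ k \<noteq> 0" using nonzero_vec_entry[OF v(1,2)] by blast
  have "0 < (\<Sum>i<N. (Re (v $ i))\<^sup>2 + (Im (v $ i))\<^sup>2)"
  proof (rule sum_pos2[of _ k])
    show "0 < (Re (v $ k))\<^sup>2 + (Im (v $ k))\<^sup>2" using k(2) complex_eq_iff[of "v$k" 0]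
      by (auto simp: sum_power2_gt_zero_iff)
  qed (use k in auto)
  hence t0: "t \<noteq> 0" unfolding tr by (metis less_irrefl of_real_eq_0_iff)
  have e1: "cnj z * cnj t = z * t" using cs unfolding st complex_cnj_mult .
  have "cnj t = t" unfolding tr complex_cnj_complex_of_real ..
  with e1 have "cnj z * t = z * t" by (simp only:)
  hence cz: "cnj z = z" by (rule mult_right_cancel[OF t0, THEN iffD1])
  have "Im z = 0" using arg_cong[OF cz, of Im] by simp
  hence zr: "z = of_real (Re z)" by (simp add: complex_eq_iff)
  have "complex_of_real (poly (char_poly A) (Re z)) = poly (char_poly Ac) z"
    unfolding cp of_real_hom.poly_map_poly[symmetric] zr[symmetric] ..
  hence "complex_of_real (poly (char_poly A) (Re z)) = 0" using z by (simp only:)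
  hence "poly (char_poly A) (Re z) = 0" by (simp only: of_real_eq_0_iff)
  hence "eigenvalue A (Re z)" using eigenvalue_root_char_poly[OF A] by simp
  then obtain w where "eigenvector A w (Re z)" unfolding eigenvalue_def by blast
  thus ?thesis unfolding eigenvector_def using A by auto
qed


lemma householder:
  fixes v :: "real vec"
  assumes v: "v \<in> carrier_vec N" and vv: "v \<bullet> v = 1" and N: "0 < N"
  shows "\<exists>H. H \<in> carrier_mat N N \<and> transpose_mat H * H = 1\<^sub>m N \<and> (\<forall>i<N. H $$ (i,0) = v $ i)"
proof -
  define e where "e (i::nat) = (if i = 0 then 1 else (0::real))" for i
  define w where "w (i::nat) = v $ i - e i" for i
  define \<sigma> where "\<sigma> = (\<Sum>k<N. (w k)\<^sup>2)"
  have vv': "(\<Sum>k<N. (v $ k)\<^sup>2) = 1" using vv v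
    by (simp add: scalar_prod_def lessThan_atLeast0 power2_eq_square)
  have sumd: "(\<Sum>k<N. (if k = i then 1 else 0) * f k) = f i" if "i < N" for i and f :: "nat \<Rightarrow> real"
    using that by (simp add: if_distrib[of "\<lambda>x. x * _"] sum.delta cong: if_cong)
  have sig: "\<sigma> = 2 - 2 * v $ 0"
  proof -
    have "\<sigma> = (\<Sum>k<N. (v $ k)\<^sup>2) - 2 * (\<Sum>k<N. e k * v $ k) + (\<Sum>k<N. e k * e k)"
      unfolding \<sigma>_def w_def by (simp add: power2_eq_square algebra_simps sum.distrib sum_subtractf sum_distrib_left)
    also have "(\<Sum>k<N. e k * v $ k) = v $ 0" using sumd[of 0 "\<lambda>k. v $ k"] N unfolding e_def by simp
    also have "(\<Sum>k<N. e k * e k) = 1" using sumd[of 0 "\<lambda>k. e k"] N unfolding e_def by simp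
    finally show ?thesis using vv' by simp
  qed
  show ?thesis
  proof (cases "\<forall>k<N. w k = 0")
    case True
    show ?thesis
    proof (intro exI[of _ "1\<^sub>m N"] conjI allI impI)
      fix i assume "i < N" thus "1\<^sub>m N $$ (i, 0) = v $ i" using True N unfolding w_def e_def by auto
    qed auto
  next
    case False
    then obtain k where k: "k < N" "w k \<noteq> 0" by auto
    have spos: "0 < \<sigma>" unfolding \<sigma>_def by (rule sum_pos2[of _ k], use k in auto)
    define c where "c = 2 / \<sigma>"
    define H where "H = mat N N (\<lambda>(i,j). (if i = j then 1 else 0) - c * w i * w j)"
    have H: "H \<in> carrier_mat N N" unfolding H_def by simp
    have cw0: "c * w 0 = -1" using sig spos unfolding c_def w_def e_def by (simp add: field_simps)
    have c2: "c * c * \<sigma> = 2 * c" using spos unfolding c_def by (simp add: field_simps)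
    have col0: "H $$ (i,0) = v $ i" if "i < N" for i
    proof -
      have "H $$ (i,0) = e i - w i * (c * w 0)" using that N unfolding H_def e_def by auto
      also have "\<dots> = v $ i" unfolding cw0 by (simp add: w_def)
      finally show ?thesis .
    qed
    have "transpose_mat H * H = 1\<^sub>m N"
    proof (rule eq_matI)
      fix i j assume "i < dim_row (1\<^sub>m N)" "j < dim_col (1\<^sub>m N)"
      hence i: "i < N" and j: "j < N" by auto
      have "(transpose_mat H * H) $$ (i,j) = (\<Sum>k<N. ((if k = i then 1 else 0) - c * w k * w i) * ((if k = j then 1 else 0) - c * w k * w j))"
        using i j H unfolding H_def by (simp add: scalar_prod_def lessThan_atLeast0)
      also have "\<dots> = (\<Sum>k<N. (if k = i then 1 else 0) * (if k = j then 1 else 0))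
         - c * w j * (\<Sum>k<N. (if k = i then 1 else 0) * w k)
         - c * w i * (\<Sum>k<N. (if k = j then 1 else 0) * w k)
         + c * c * w i * w j * \<sigma>"
        unfolding \<sigma>_def by (simp add: algebra_simps sum.distrib sum_subtractf sum_distrib_left power2_eq_square)
      also have "\<dots> = (if i = j then 1 else 0) - c * w j * w i - c * w i * w j + c * c * \<sigma> * w i * w j"
        using sumd[OF i] sumd[OF j] i by (simp add: algebra_simps)
      also have "\<dots> = (if i = j then 1 else 0)" unfolding c2 by (simp add: algebra_simps)
      finally show "(transpose_mat H * H) $$ (i,j) = 1\<^sub>m N $$ (i,j)" using i j by simp
    qed (use H in auto)
    thus ?thesis using H col0 by blast
  qed
qed
lemma fdiag_entry: assumes "U \<in> carrier_mat N N" "i < N" "j < N"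
  shows "(U * mat_diag N d * transpose_mat U) $$ (i,j) = (\<Sum>k<N. U $$ (i,k) * d k * U $$ (j,k))"
  using assms by (simp add: mat_diag_mult_right[of U N N] scalar_prod_def lessThan_atLeast0)

lemma TT_entry: assumes "F \<in> carrier_mat N N" "i < N" "j < N"
  shows "(transpose_mat F * F) $$ (i,j) = (\<Sum>k<N. F $$ (k,i) * F $$ (k,j))"
  using assms by (simp add: scalar_prod_def lessThan_atLeast0)

lemma spectral_aux: "\<forall>A. A \<in> carrier_mat N N \<longrightarrow> transpose_mat A = A \<longrightarrow> (\<exists>U d. orth N U \<and> A = fdiag N U d)"
proof (induction N)
  case 0
  show ?case
  proof (intro allI impI exI conjI)
    fix A :: "real mat" assume A: "A \<in> carrier_mat 0 0"
    show "orth 0 (1\<^sub>m 0)" unfolding orth_def by simp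
    show "A = fdiag 0 (1\<^sub>m 0) (\<lambda>_. 0)" unfolding fdiag_def using A by (intro eq_matI, auto)
  qed
next
  case (Suc m)
  show ?case
  proof (intro allI impI)
    fix A :: "real mat" assume A: "A \<in> carrier_mat (Suc m) (Suc m)" and At: "transpose_mat A = A"
    let ?N = "Suc m"
    obtain r v0 where v0: "v0 \<in> carrier_vec ?N" "v0 \<noteq> 0\<^sub>v ?N" "A *\<^sub>v v0 = r \<cdot>\<^sub>v v0"
      using real_eigen[OF A At] by blast
    define s where "s = (\<Sum>k<?N. (v0 $ k)\<^sup>2)"
    obtain k where k: "k < ?N" "v0 $ k \<noteq> 0" using nonzero_vec_entry[OF v0(1,2)] by blast
    have spos: "0 < s" unfolding s_def by (rule sum_pos2[of _ k], use k in auto)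
    define v where "v = (1 / sqrt s) \<cdot>\<^sub>v v0"
    have v: "v \<in> carrier_vec ?N" unfolding v_def using v0 by simp
    have vv: "v \<bullet> v = 1"
    proof -
      have "v \<bullet> v = (\<Sum>k\<in>{0..<?N}. (1 / sqrt s * v0 $ k) * (1 / sqrt s * v0 $ k))"
        unfolding v_def scalar_prod_def using v0(1) by simp
      also have "\<dots> = (\<Sum>k<?N. (v0 $ k)\<^sup>2 / s)"
        unfolding lessThan_atLeast0[symmetric]
      proof (rule sum.cong[OF refl])
        fix k
        have "sqrt s * sqrt s = s" using spos by simp
        thus "1 / sqrt s * v0 $ k * (1 / sqrt s * v0 $ k) = (v0 $ k)\<^sup>2 / s"
          by (simp add: power2_eq_square field_simps)
      qed
      also have "\<dots> = s / s" unfolding s_def sum_divide_distrib ..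
      finally show ?thesis using spos by simp
    qed
    have Av: "A *\<^sub>v v = r \<cdot>\<^sub>v v"
    proof -
      have "A *\<^sub>v v = (1 / sqrt s) \<cdot>\<^sub>v (A *\<^sub>v v0)" unfolding v_def by (rule mult_mat_vec[OF A v0(1)])
      also have "\<dots> = (1 / sqrt s) \<cdot>\<^sub>v (r \<cdot>\<^sub>v v0)" unfolding v0(3) ..
      also have "\<dots> = r \<cdot>\<^sub>v v" unfolding v_def smult_smult_assoc by (simp only: mult.commute)
      finally show ?thesis .
    qed
    obtain H where H: "H \<in> carrier_mat ?N ?N" "transpose_mat H * H = 1\<^sub>m ?N" "\<forall>i<?N. H $$ (i,0) = v $ i"
      using householder[OF v vv] by blast
    have oH: "orth ?N H" unfolding orth_def using H(1,2) by blast
    have colH: "col H 0 = v"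
    proof (rule eq_vecI)
      show "dim_vec (col H 0) = dim_vec v" using H(1) v by simp
      fix i assume "i < dim_vec v"
      hence i: "i < ?N" using v by simp
      show "col H 0 $ i = v $ i" using H(1,3) i by simp
    qed
    define B where "B = transpose_mat H * A * H"
    have B: "B \<in> carrier_mat ?N ?N" unfolding B_def using H A by simp
    have Bt: "transpose_mat B = B"
    proof -
      have "transpose_mat B = transpose_mat H * transpose_mat (transpose_mat H * A)"
        unfolding B_def by (rule transpose_mult[of _ ?N ?N _ ?N]) (use H A in simp_all)
      also have "transpose_mat (transpose_mat H * A) = transpose_mat A * H"
        by (subst transpose_mult[of _ ?N ?N _ ?N]) (use H A in simp_all)
      also have "transpose_mat H * (transpose_mat A * H) = B" unfolding At B_def
        by (rule assoc_mult_mat[symmetric, of _ ?N ?N _ ?N _ ?N]) (use H A in simp_all)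
      finally show ?thesis .
    qed
    have Bi0: "B $$ (i,0) = (if i = 0 then r else 0)" if i: "i < ?N" for i
    proof -
      have B': "B = transpose_mat H * (A * H)" unfolding B_def using H A by (simp add: assoc_mult_mat[of _ ?N ?N _ ?N _ ?N])
      have e1: "B $$ (i,0) = row (transpose_mat H) i \<bullet> col (A * H) 0" unfolding B'
        by (rule index_mult_mat(1)) (use i H A in auto)
      have e2: "row (transpose_mat H) i = col H i" by (rule row_transpose) (use i H in auto)
      have e3: "col (A * H) 0 = A *\<^sub>v col H 0" by (rule col_mult2[OF A H(1)]) simp
      have "B $$ (i,0) = col H i \<bullet> (A *\<^sub>v col H 0)" by (simp only: e1 e2 e3)
      also have "\<dots> = r * (col H i \<bullet> col H 0)" unfolding colH Av
        by (rule scalar_prod_smult_right) (use i H v in simp)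
      also have "col H i \<bullet> col H 0 = (transpose_mat H * H) $$ (i,0)"
      proof -
        have "(transpose_mat H * H) $$ (i,0) = row (transpose_mat H) i \<bullet> col H 0"
          by (rule index_mult_mat(1)) (use i H in auto)
        thus ?thesis unfolding e2 by simp
      qed
      also have "\<dots> = (if i = 0 then 1 else 0)" unfolding H(2) using i by simp
      finally show ?thesis by simp
    qed
    have B0j: "B $$ (0,j) = (if j = 0 then r else 0)" if j: "j < ?N" for j
    proof -
      have "B $$ (0,j) = transpose_mat B $$ (j,0)" using j B by simp
      thus ?thesis unfolding Bt using Bi0[OF j] by simp
    qed
    define A' where "A' = mat m m (\<lambda>(i,j). B $$ (Suc i, Suc j))"
    have A': "A' \<in> carrier_mat m m" unfolding A'_def by simp
    have A't: "transpose_mat A' = A'"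
    proof (rule eq_matI)
      fix i j assume "i < dim_row A'" "j < dim_col A'"
      hence ij: "i < m" "j < m" unfolding A'_def by auto
      have "B $$ (Suc j, Suc i) = transpose_mat B $$ (Suc i, Suc j)" using ij B by simp
      thus "transpose_mat A' $$ (i, j) = A' $$ (i, j)" unfolding Bt A'_def using ij by simp
    qed (auto simp: A'_def)
    obtain U' d' where U': "orth m U'" "A' = fdiag m U' d'" using Suc.IH A' A't by blast
    have U'N: "U' \<in> carrier_mat m m" using U' by simp
    define F where "F = mat ?N ?N (\<lambda>(i,j). if i = 0 \<and> j = 0 then 1 else if i = 0 \<or> j = 0 then 0 else U' $$ (i - 1, j - 1))"
    define d where "d i = (if i = 0 then r else d' (i - 1))" for i
    have F: "F \<in> carrier_mat ?N ?N" unfolding F_def by simp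
    have FF: "transpose_mat F * F = 1\<^sub>m ?N"
    proof (rule eq_matI)
      fix i j assume "i < dim_row (1\<^sub>m ?N)" "j < dim_col (1\<^sub>m ?N)"
      hence i: "i < ?N" and j: "j < ?N" by auto
      have "(transpose_mat F * F) $$ (i,j) = F $$ (0,i) * F $$ (0,j) + (\<Sum>k<m. F $$ (Suc k, i) * F $$ (Suc k, j))"
        by (simp only: TT_entry[OF F i j] sum.lessThan_Suc_shift)
      also have "\<dots> = 1\<^sub>m ?N $$ (i,j)"
      proof (cases i)
        case 0 thus ?thesis using i j unfolding F_def by auto
      next
        case (Suc i')
        show ?thesis
        proof (cases j)
          case 0 thus ?thesis using i j \<open>i = Suc i'\<close> unfolding F_def by auto
        next
          case (Suc j')
          have "(\<Sum>k<m. F $$ (Suc k, i) * F $$ (Suc k, j)) = (\<Sum>k<m. U' $$ (k, i') * U' $$ (k, j'))"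
            using i j \<open>i = Suc i'\<close> \<open>j = Suc j'\<close> unfolding F_def by simp
          also have "\<dots> = (transpose_mat U' * U') $$ (i', j')"
            using TT_entry[OF U'N, of i' j'] i j \<open>i = Suc i'\<close> \<open>j = Suc j'\<close> by simp
          also have "\<dots> = 1\<^sub>m m $$ (i', j')" unfolding orth_TU[OF U'(1)] ..
          finally show ?thesis using i j \<open>i = Suc i'\<close> \<open>j = Suc j'\<close> unfolding F_def by simp
        qed
      qed
      finally show "(transpose_mat F * F) $$ (i,j) = 1\<^sub>m ?N $$ (i,j)" .
    qed (use F in auto)
    have BF: "B = F * mat_diag ?N d * transpose_mat F"
    proof (rule eq_matI)
      fix i j assume "i < dim_row (F * mat_diag ?N d * transpose_mat F)" "j < dim_col (F * mat_diag ?N d * transpose_mat F)"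
      hence i: "i < ?N" and j: "j < ?N" using F by auto
      have "(F * mat_diag ?N d * transpose_mat F) $$ (i,j) = F $$ (i,0) * d 0 * F $$ (j,0) + (\<Sum>k<m. F $$ (i, Suc k) * d (Suc k) * F $$ (j, Suc k))"
        by (simp only: fdiag_entry[OF F i j] sum.lessThan_Suc_shift)
      also have "\<dots> = B $$ (i,j)"
      proof (cases i)
        case 0 thus ?thesis using i j B0j[OF j] unfolding F_def d_def by auto
      next
        case (Suc i')
        show ?thesis
        proof (cases j)
          case 0 thus ?thesis using i j \<open>i = Suc i'\<close> Bi0[OF i] unfolding F_def d_def by auto
        next
          case (Suc j')
          have "(\<Sum>k<m. F $$ (i, Suc k) * d (Suc k) * F $$ (j, Suc k)) = (\<Sum>k<m. U' $$ (i', k) * d' k * U' $$ (j', k))"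
            using i j \<open>i = Suc i'\<close> \<open>j = Suc j'\<close> unfolding F_def d_def by simp
          also have "\<dots> = A' $$ (i', j')"
            unfolding U'(2) fdiag_def using fdiag_entry[OF U'N, of i' j'] i j \<open>i = Suc i'\<close> \<open>j = Suc j'\<close> by simp
          also have "\<dots> = B $$ (i, j)" unfolding A'_def using i j \<open>i = Suc i'\<close> \<open>j = Suc j'\<close> by simp
          finally show ?thesis using i j \<open>i = Suc i'\<close> \<open>j = Suc j'\<close> unfolding F_def by simp
        qed
      qed
      finally show "B $$ (i,j) = (F * mat_diag ?N d * transpose_mat F) $$ (i,j)" by simp
    qed (use B F in auto)
    have oF: "orth ?N F" unfolding orth_def using F FF by auto
    have oHF: "orth ?N (H * F)" unfolding orth_def using H F FF
      by (simp add: transpose_mult[of _ ?N ?N _ ?N] assoc_mult_mat[of _ ?N ?N _ ?N _ ?N] orth_cancel1[OF oH])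
    have "A = H * B * transpose_mat H" unfolding B_def using H A oH
      by (simp add: assoc_mult_mat[of _ ?N ?N _ ?N _ ?N] orth_UT)
    also have "\<dots> = fdiag ?N (H * F) d" unfolding BF fdiag_def using H F
      by (simp add: transpose_mult[of _ ?N ?N _ ?N] assoc_mult_mat[of _ ?N ?N _ ?N _ ?N])
    finally show "\<exists>U d. orth ?N U \<and> A = fdiag ?N U d" using oHF by blast
  qed
qed

lemma spectral: "A \<in> carrier_mat N N \<Longrightarrow> transpose_mat A = A \<Longrightarrow> \<exists>U d. orth N U \<and> A = fdiag N U d"
  using spectral_aux by blast

lemma spd_decomp: assumes "sym_pos_def_mat N A"
  shows "\<exists>U d. orth N U \<and> (\<forall>i<N. 0 < d i) \<and> A = fdiag N U d"
proof -
  have A: "A \<in> carrier_mat N N" and At: "transpose_mat A = A"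
    and pd: "\<And>x. x \<in> carrier_vec N \<Longrightarrow> x \<noteq> 0\<^sub>v N \<Longrightarrow> 0 < x \<bullet> (A *\<^sub>v x)"
    using assms unfolding sym_pos_def_mat_def by auto
  obtain U d where U: "orth N U" and Ad: "A = fdiag N U d" using spectral[OF A At] by blast
  have UN: "U \<in> carrier_mat N N" using U by simp
  have "0 < d i" if i: "i < N" for i
  proof -
    have "transpose_mat U * A * U = mat_diag N d"
      unfolding Ad fdiag_def using UN U by (simp add: assoc_mult_mat[of _ N N _ N _ N] orth_TU)
    hence "(transpose_mat U * A * U) $$ (i,i) = d i" using i by (simp add: mat_diag_def)
    moreover have "(transpose_mat U * A * U) $$ (i,i) = col U i \<bullet> (A *\<^sub>v col U i)"
    proof -
      have e0: "transpose_mat U * A * U = transpose_mat U * (A * U)"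
        by (rule assoc_mult_mat[of _ N N _ N _ N]) (use UN A in simp_all)
      have e1: "(transpose_mat U * (A * U)) $$ (i,i) = row (transpose_mat U) i \<bullet> col (A * U) i"
        by (rule index_mult_mat(1)) (use i UN A in auto)
      have e2: "row (transpose_mat U) i = col U i" by (rule row_transpose) (use i UN in auto)
      have e3: "col (A * U) i = A *\<^sub>v col U i" by (rule col_mult2[OF A UN i])
      show ?thesis by (simp only: e0 e1 e2 e3)
    qed
    moreover have "col U i \<noteq> 0\<^sub>v N"
    proof
      assume "col U i = 0\<^sub>v N"
      have e1: "(transpose_mat U * U) $$ (i,i) = row (transpose_mat U) i \<bullet> col U i"
        by (rule index_mult_mat(1)) (use i UN in auto)
      have e2: "row (transpose_mat U) i = col U i" by (rule row_transpose) (use i UN in auto)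
      have "(transpose_mat U * U) $$ (i,i) = 0" unfolding e1 e2 \<open>col U i = 0\<^sub>v N\<close> by simp
      moreover have "(transpose_mat U * U) $$ (i,i) = 1" unfolding orth_TU[OF U] using i by simp
      ultimately show False by simp
    qed
    moreover have "col U i \<in> carrier_vec N" using i UN by simp
    ultimately show ?thesis using pd[of "col U i"] by simp
  qed
  thus ?thesis using U Ad by blast
qed

lemma rpow_decomp: assumes "sym_pos_def_mat N A"
  shows "\<exists>U d. orth N U \<and> (\<forall>i<N. 0 < d i) \<and> A = fdiag N U d \<and> mat_rpow A s = fdiag N U (\<lambda>i. d i powr s)"
proof -
  have dr: "dim_row A = N" using assms unfolding sym_pos_def_mat_def by auto
  obtain U d where U: "orth N U" "\<forall>i<N. 0 < d i" "A = fdiag N U d"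
    using spd_decomp[OF assms] by (elim exE conjE) (rule that)
  define Q where "Q P = (\<exists>U d. U \<in> carrier_mat (dim_row A) (dim_row A) \<and>
      transpose_mat U * U = 1\<^sub>m (dim_row A) \<and>
      (\<forall>i < dim_row A. 0 < d i) \<and>
      A = U * mat_diag (dim_row A) d * transpose_mat U \<and>
      P = U * mat_diag (dim_row A) (\<lambda>i. d i powr s) * transpose_mat U)" for P
  have "Q (U * mat_diag N (\<lambda>i. d i powr s) * transpose_mat U)"
    unfolding Q_def dr
  proof (intro exI[of _ U] exI[of _ d] conjI)
    show "U \<in> carrier_mat N N" using U(1) by simp
    show "transpose_mat U * U = 1\<^sub>m N" using orth_TU[OF U(1)] .
    show "\<forall>i<N. 0 < d i" using U(2) .
    show "A = U * mat_diag N d * transpose_mat U" using U(3) unfolding fdiag_def .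
  qed (rule refl)
  hence "Q (SOME P. Q P)" by (rule someI)
  moreover have "mat_rpow A s = (SOME P. Q P)" unfolding mat_rpow_def Q_def ..
  ultimately have "Q (mat_rpow A s)" by (simp only:)
  then obtain U' d' where U': "U' \<in> carrier_mat N N" "transpose_mat U' * U' = 1\<^sub>m N"
     "\<forall>i < N. 0 < d' i" "A = U' * mat_diag N d' * transpose_mat U'"
     "mat_rpow A s = U' * mat_diag N (\<lambda>i. d' i powr s) * transpose_mat U'"
    unfolding Q_def dr by (elim exE conjE) (rule that)
  show ?thesis
  proof (intro exI[of _ U'] exI[of _ d'] conjI)
    show "orth N U'" unfolding orth_def using U'(1,2) by (rule conjI)
    show "\<forall>i<N. 0 < d' i" using U'(3) .
    show "A = fdiag N U' d'" unfolding fdiag_def by (rule U'(4))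
    show "mat_rpow A s = fdiag N U' (\<lambda>i. d' i powr s)" unfolding fdiag_def by (rule U'(5))
  qed
qed

lemma Jmat_carrier: "Jmat n \<in> carrier_mat (2*n) (2*n)" unfolding Jmat_def by simp

theorem mainTheorem8:
  fixes n :: nat and A B :: "real mat"
  assumes "sym_pos_def_mat (2*n) A" and "sym_pos_def_mat (2*n) B"
    and "A * Jmat n * B = B * Jmat n * A"
    and "A * B = B * A"
  shows "\<forall>s::real. mat_rpow A s * Jmat n * mat_rpow B s = mat_rpow B s * Jmat n * mat_rpow A s"
proof
  fix s :: real
  obtain U a where U: "orth (2*n) U" "\<forall>i<2*n. 0 < a i" "A = fdiag (2*n) U a"
    "mat_rpow A s = fdiag (2*n) U (\<lambda>i. a i powr s)" using rpow_decomp[OF assms(1), of s] by (elim exE conjE) (rule that)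
  obtain V b where V: "orth (2*n) V" "\<forall>i<2*n. 0 < b i" "B = fdiag (2*n) V b"
    "mat_rpow B s = fdiag (2*n) V (\<lambda>i. b i powr s)" using rpow_decomp[OF assms(2), of s] by (elim exE conjE) (rule that)
  show "mat_rpow A s * Jmat n * mat_rpow B s = mat_rpow B s * Jmat n * mat_rpow A s"
  proof -
    have AB: "fdiag (2*n) U a * fdiag (2*n) V b = fdiag (2*n) V b * fdiag (2*n) U a"
      using assms(4) by (simp only: U(3) V(3))
    have AJB: "fdiag (2*n) U a * Jmat n * fdiag (2*n) V b = fdiag (2*n) V b * Jmat n * fdiag (2*n) U a"
      using assms(3) by (simp only: U(3) V(3))
    show ?thesis unfolding U(4) V(4)
      by (rule core[OF U(1) V(1) Jmat_carrier U(2) V(2) AB AJB])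
  qed
qed

end
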